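(* Let $c:\mathbb{Q}\times\mathbb{Q}\to\mathbb{Q}$ (the controller) be any function such that for all $x,y\in\mathbb{Q}$ with $|x|\le 3.25$ and $|y|\le 3.25$ we have $|c(x,y)+2x-y|<1.25$. Consider the discrete-time system whose states are quadruples $(w,p,v,s)\in\mathbb{Q}^4$ (wind speed, position on the $y$-axis, velocity in the $y$-direction, most recent sensor reading), starting from the initial state $(w_0,p_0,v_0,s_0)=(0,0,0,0)$. An observation is a pair $(\delta,\varepsilon)\in\mathbb{Q}^2$ (wind shift, sensor error), and an observation $(\delta,\varepsilon)$ transforms a state $(w,p,v,s)$ into $(w',p',v',s')$ where $w'=w+\delta$, $p'=p+v+w'$, $s'=p'+\varepsilon$, $v'=v+c(s',s)$. Then for every finite sequence of observations $(\delta_1,\varepsilon_1),\dots,(\delta_k,\varepsilon_k)$ ($k\ge 0$) satisfying $|\delta_i|\le 1$ and $|\varepsilon_i|\le 0.25$ for all $i$, the state reached after applying these observations in turn has position $p$ with $|p|\le 3$; i.e. the car never leaves the road.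
   Context: The model describes a car travelling along a straight road of width 6 parallel to the $x$-axis (so being on the road means the $y$-position satisfies $|p|\le 3$), subject to a cross-wind perpendicular to the road, with a noisy position sensor; at each step the controller receives the current and previous sensor readings and outputs a change in the car's $y$-velocity. Informally: if the wind speed never shifts by more than 1 per unit time and the sensor is never off by more than 0.25, then the car never leaves the road. *)

theory Defs
  imports Complex_Main
begin

type_synonym state = "rat \<times> rat \<times> rat \<times> rat"

definition step :: "(rat \<Rightarrow> rat \<Rightarrow> rat) \<Rightarrow> state \<Rightarrow> rat \<times> rat \<Rightarrow> state" where
  "step c st ob =
     (case st of (w, p, v, s) \<Rightarrow> case ob of (d, e) \<Rightarrow>
        let w' = w + d; p' = p + v + w'; s' = p' + e; v' = v + c s' s
        in (w', p', v', s'))"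

definition run :: "(rat \<Rightarrow> rat \<Rightarrow> rat) \<Rightarrow> (rat \<times> rat) list \<Rightarrow> state" where
  "run c obs = foldl (step c) (0, 0, 0, 0) obs"

definition pos :: "state \<Rightarrow> rat" where
  "pos st = fst (snd st)"

end

theory Submission
  imports Defs
begin

definition inv :: "state \<Rightarrow> bool" where
  "inv st = (case st of (w, p, v, s) \<Rightarrow>
     \<bar>p\<bar> \<le> 3 \<and> \<bar>s - p\<bar> \<le> 1/4 \<and> \<bar>v + w + 2*s - p\<bar> < 3/2)"

lemma inv_step:
  fixes c :: "rat \<Rightarrow> rat \<Rightarrow> rat"
  assumes ctrl: "\<And>x y. \<bar>x\<bar> \<le> 13/4 \<Longrightarrow> \<bar>y\<bar> \<le> 13/4 \<Longrightarrow> \<bar>c x y + 2 * x - y\<bar> < 5/4"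
  and I: "inv st" and d: "\<bar>d\<bar> \<le> 1" and e: "\<bar>e\<bar> \<le> 1/4"
  shows "inv (step c st (d, e))"
proof -
  obtain w p v s where st: "st = (w, p, v, s)" by (cases st) auto
  have i: "\<bar>p\<bar> \<le> 3" "\<bar>s - p\<bar> \<le> 1/4" "\<bar>v + w + 2*s - p\<bar> < 3/2"
    using I by (auto simp: inv_def st)
  define p' where "p' = p + v + (w + d)"
  have p': "\<bar>p'\<bar> \<le> 3" using i d unfolding p'_def by (simp add: abs_if split: if_splits) linarith?
  have hs: "\<bar>p' + e\<bar> \<le> 13/4" "\<bar>s\<bar> \<le> 13/4" using p' e i by (simp_all add: abs_if split: if_splits; linarith)+
  have u: "\<bar>c (p' + e) s + 2 * (p' + e) - s\<bar> < 5/4" using ctrl hs by blast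
  have "\<bar>v + c (p' + e) s + (w + d) + 2*(p' + e) - p'\<bar> < 3/2"
    using u i unfolding p'_def by (simp add: abs_if split: if_splits; linarith)
  moreover have "step c st (d, e) = (w + d, p', v + c (p' + e) s, p' + e)"
    by (simp add: step_def st Let_def p'_def)
  ultimately show ?thesis using p' e
    by (simp add: inv_def algebra_simps)
qed

theorem theorem1:
  fixes c :: "rat \<Rightarrow> rat \<Rightarrow> rat"
  assumes ctrl: "\<And>x y. \<bar>x\<bar> \<le> 13/4 \<Longrightarrow> \<bar>y\<bar> \<le> 13/4 \<Longrightarrow> \<bar>c x y + 2 * x - y\<bar> < 5/4"
  and obs: "\<And>d e. (d, e) \<in> set obs \<Longrightarrow> \<bar>d\<bar> \<le> 1 \<and> \<bar>e\<bar> \<le> 1/4"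
  shows "\<bar>pos (run c obs)\<bar> \<le> 3"
proof -
  have "inv (foldl (step c) (0, 0, 0, 0) obs)"
    using obs
  proof (induction obs rule: rev_induct)
    case Nil then show ?case by (simp add: inv_def)
  next
    case (snoc x xs)
    obtain d e where x: "x = (d, e)" by (cases x) auto
    have "inv (foldl (step c) (0, 0, 0, 0) xs)" using snoc by auto
    moreover have "\<bar>d\<bar> \<le> 1 \<and> \<bar>e\<bar> \<le> 1/4" using snoc.prems x by auto
    ultimately show ?case using inv_step[OF ctrl] x by auto
  qed
  then show ?thesis
    by (cases "foldl (step c) (0, 0, 0, 0) obs") (auto simp: run_def pos_def inv_def)
qed

end
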